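(* Let $D$ be a division ring with center $F$. Then either $D$ has a maximal subring, or no element $\alpha\in D\setminus F$ is algebraic over $F$.
   Context: All rings are associative unital and subrings share the identity. A maximal subring of a ring $T$ is a proper subring maximal under inclusion among proper subrings of $T$. *)

theory Defs
  imports Main
begin

definition is_subring :: "'a::ring_1 set \<Rightarrow> bool" where
  "is_subring S \<longleftrightarrow> 1 \<in> S \<and> (\<forall>x\<in>S. \<forall>y\<in>S. x - y \<in> S \<and> x * y \<in> S)"

definition maximal_subring :: "'a::ring_1 set \<Rightarrow> bool" where
  "maximal_subring S \<longleftrightarrow> is_subring S \<and> S \<noteq> UNIV \<and>
     (\<forall>T. is_subring T \<and> S \<subseteq> T \<and> T \<noteq> UNIV \<longrightarrow> T = S)"

definition ring_center :: "'a::ring_1 set" where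
  "ring_center = {z. \<forall>x. z * x = x * z}"

text \<open>a is algebraic over K: root of a nonzero polynomial with coefficients in K
  (coefficients written on the left; for central K this is the usual notion).\<close>
definition algebraic_over :: "'a::ring_1 set \<Rightarrow> 'a \<Rightarrow> bool" where
  "algebraic_over K a \<longleftrightarrow> (\<exists>(n::nat) c. (\<exists>i\<le>n. c i \<noteq> 0) \<and> (\<forall>i\<le>n. c i \<in> K) \<and>
       (\<Sum>i\<le>n. c i * a ^ i) = 0)"

end

theory Submission imports Defs begin

definition tup :: "'a::ring_1 \<Rightarrow> ('a \<times> 'a) list \<Rightarrow> nat \<Rightarrow> 'a" where
  "tup a ps i = sum_list (map (\<lambda>(u,v). u * a^i * v) ps)"

definition gg :: "(nat \<Rightarrow> 'a::ring_1) \<Rightarrow> nat \<Rightarrow> 'a \<Rightarrow> nat \<Rightarrow> 'a" where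
  "gg p n a i = (\<Sum>j<n. p (i+j+1) * a^j)"

definition HH :: "(nat \<Rightarrow> 'a::ring_1) \<Rightarrow> nat \<Rightarrow> 'a \<Rightarrow> 'a \<Rightarrow> 'a" where
  "HH p n a y = (\<Sum>i<n. a^i * y * gg p n a i)"

lemma tup_append: "tup a (xs @ ys) i = tup a xs i + tup a ys i"
  by (simp add: tup_def)

lemma tup_left: "tup a (map (\<lambda>(u,v). (b*u, v)) ps) i = b * tup a ps i"
  by (induction ps) (auto simp: tup_def algebra_simps)

lemma tup_right: "tup a (map (\<lambda>(u,v). (-u, v*d)) ps) i = - (tup a ps i * d)"
  by (induction ps) (auto simp: tup_def algebra_simps)

lemma center_sum: "(\<And>i. i \<in> I \<Longrightarrow> f i \<in> ring_center) \<Longrightarrow> sum f I \<in> ring_center"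
proof -
  assume h: "\<And>i. i \<in> I \<Longrightarrow> f i \<in> ring_center"
  have "sum f I * x = x * sum f I" for x
  proof -
    have "sum f I * x = (\<Sum>i\<in>I. f i * x)" by (rule sum_distrib_right)
    also have "\<dots> = (\<Sum>i\<in>I. x * f i)"
    proof (rule sum.cong)
      fix i assume "i \<in> I"
      then show "f i * x = x * f i" using h unfolding ring_center_def by blast
    qed (rule refl)
    also have "\<dots> = x * sum f I" by (rule sum_distrib_left[symmetric])
    finally show ?thesis .
  qed
  then show ?thesis unfolding ring_center_def by blast
qed

lemma center_mult: "x \<in> ring_center \<Longrightarrow> y \<in> ring_center \<Longrightarrow> x * y \<in> ring_center"
proof -
  assume hx: "x \<in> ring_center" and hy: "y \<in> ring_center"
  have cx: "x * z = z * x" for z using hx unfolding ring_center_def by blast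
  have cy: "y * z = z * y" for z using hy unfolding ring_center_def by blast
  have "x * y * z = z * (x * y)" for z
  proof -
    have "x * y * z = x * (y * z)" by (rule mult.assoc)
    also have "\<dots> = x * (z * y)" by (simp only: cy[of z])
    also have "\<dots> = (x * z) * y" by (rule mult.assoc[symmetric])
    also have "\<dots> = (z * x) * y" by (simp only: cx[of z])
    also have "\<dots> = z * (x * y)" by (rule mult.assoc)
    finally show ?thesis .
  qed
  then show ?thesis unfolding ring_center_def by blast
qed

lemma center_inverse: "(x::'a::division_ring) \<in> ring_center \<Longrightarrow> inverse x \<in> ring_center"
  unfolding ring_center_def
proof (clarsimp)
  fix y assume h: "\<forall>y. x * y = y * x"
  show "inverse x * y = y * inverse x"
  proof (cases "x = 0")
    case False
    have "inverse x * y = inverse x * (y * x) * inverse x" using False by (simp add: mult.assoc)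
    also have "\<dots> = inverse x * (x * y) * inverse x" using h[rule_format, of y] by (simp only:)
    also have "\<dots> = y * inverse x" using False by (simp add: mult.assoc[symmetric])
    finally show ?thesis .
  qed simp
qed

lemma subring_0: "is_subring T \<Longrightarrow> 0 \<in> T"
  unfolding is_subring_def by (metis diff_self)
lemma subring_neg: "is_subring T \<Longrightarrow> a \<in> T \<Longrightarrow> -a \<in> T"
  using subring_0 unfolding is_subring_def by (metis diff_0)
lemma subring_add: "is_subring T \<Longrightarrow> a \<in> T \<Longrightarrow> b \<in> T \<Longrightarrow> a + b \<in> T"
  using subring_neg unfolding is_subring_def by (metis diff_minus_eq_add)
lemma subring_mult: "is_subring T \<Longrightarrow> a \<in> T \<Longrightarrow> b \<in> T \<Longrightarrow> a * b \<in> T"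
  unfolding is_subring_def by blast
lemma subring_sum_list: "is_subring T \<Longrightarrow> (\<And>x. x \<in> set xs \<Longrightarrow> f x \<in> T) \<Longrightarrow> sum_list (map f xs) \<in> T"
  by (induction xs) (auto simp: subring_0 subring_add)

lemma sum_list_sum_swap: "sum_list (map (\<lambda>x. \<Sum>i\<in>I. f x i) xs) = (\<Sum>i\<in>I. sum_list (map (\<lambda>x. f x i) xs))"
  by (induction xs) (auto simp: sum.distrib)

lemma h5: fixes a :: "'a::ring_1"
  assumes pc: "\<And>i. p i \<in> ring_center"
  shows "(\<Sum>i<n. a^i * y * p i) = (\<Sum>i<n. p i * a^i) * y"
proof -
  have "a^i * y * p i = p i * a^i * y" for i
  proof -
    have c: "\<And>x. p i * x = x * p i" using pc[of i] unfolding ring_center_def by simp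
    have "a^i * y * p i = a^i * (y * p i)" by (simp only: mult.assoc)
    also have "\<dots> = a^i * (p i * y)" by (simp only: c[of y])
    also have "\<dots> = (a^i * p i) * y" by (simp only: mult.assoc)
    also have "\<dots> = p i * a^i * y" by (simp only: c[of "a^i"])
    finally show ?thesis .
  qed
  then show ?thesis by (simp add: sum_distrib_right)
qed

lemma h6: fixes a :: "'a::ring_1"
  assumes pn: "p n = 1" and root: "(\<Sum>i\<le>n. p i * a^i) = 0"
  shows "a^n * y + (\<Sum>i<n. p i * a^i) * y = 0"
  proof -
    have "(\<Sum>i\<le>n. p i * a^i) = (\<Sum>i<Suc n. p i * a^i)"
      by (simp only: lessThan_Suc_atMost)
    also have "\<dots> = (\<Sum>i<n. p i * a^i) + a^n" using pn by (simp only: sum.lessThan_Suc mult_1)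
    finally have "(\<Sum>i\<le>n. p i * a^i) = (\<Sum>i<n. p i * a^i) + a^n" .
    then have "(\<Sum>i<n. p i * a^i) + a^n = 0" using root by simp
    then have "((\<Sum>i<n. p i * a^i) + a^n) * y = 0" by simp
    then show ?thesis by (simp only: distrib_right add.commute)
  qed

lemma HH_comm:
  fixes a :: "'a::ring_1"
  assumes pc: "\<And>i. p i \<in> ring_center" and pn: "p n = 1" and pz: "\<And>i. i > n \<Longrightarrow> p i = 0"
    and root: "(\<Sum>i\<le>n. p i * a^i) = 0"
  shows "a * HH p n a y = HH p n a y * a"
proof -
  define G where "G i = (\<Sum>j\<le>n. p (i+j) * a^j)" for i
  have GS: "G (Suc i) = gg p n a i" for i
  proof -
    have "G (Suc i) = (\<Sum>j<Suc n. p (Suc i+j) * a^j)" unfolding G_def by (simp only: lessThan_Suc_atMost)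
    also have "\<dots> = (\<Sum>j<n. p (Suc i+j) * a^j)"
    proof -
      have z: "p (Suc i + n) = 0" by (rule pz) simp
      show ?thesis by (simp only: sum.lessThan_Suc z mult_zero_left add_0_right)
    qed
    finally show ?thesis unfolding gg_def by simp
  qed
  have gA: "gg p n a i * a = G i - p i" for i
  proof -
    have "G i = (\<Sum>j<Suc n. p (i+j) * a^j)" unfolding G_def by (simp only: lessThan_Suc_atMost)
    also have "\<dots> = p i + (\<Sum>j<n. p (i + Suc j) * a^(Suc j))"
      by (subst sum.lessThan_Suc_shift) simp
    also have "(\<Sum>j<n. p (i + Suc j) * a^(Suc j)) = gg p n a i * a"
      unfolding gg_def sum_distrib_right by (simp add: mult.assoc power_commutes)
    finally show ?thesis by simp
  qed
  have G0: "G 0 = 0" using root unfolding G_def by simp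
  have Gn: "G n = 1"
  proof -
    have "G n = (\<Sum>j\<le>n. if j = 0 then 1 else 0)"
      unfolding G_def by (rule sum.cong) (auto simp: pn pz)
    then show ?thesis by simp
  qed
  define f where "f i = a^i * y * G i" for i
  have h1: "a * HH p n a y = (\<Sum>i<n. f (Suc i))"
    unfolding HH_def f_def sum_distrib_left GS by (simp add: mult.assoc)
  have h2: "HH p n a y * a = (\<Sum>i<n. f i) - (\<Sum>i<n. a^i * y * p i)"
    unfolding HH_def f_def sum_distrib_right
    by (simp add: mult.assoc gA right_diff_distrib sum_subtractf)
  have h3: "(\<Sum>i<n. f (Suc i)) - (\<Sum>i<n. f i) = f n - f 0"
    using sum_lessThan_telescope[of f n] by (simp add: sum_subtractf)
  have h4: "f n - f 0 = a^n * y" unfolding f_def using G0 Gn by simp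
  have h5: "(\<Sum>i<n. a^i * y * p i) = (\<Sum>i<n. p i * a^i) * y" by (rule h5[OF pc])
  have h6: "a^n * y + (\<Sum>i<n. p i * a^i) * y = 0" by (rule h6[OF pn root])
  have "a * HH p n a y - HH p n a y * a = ((\<Sum>i<n. f (Suc i)) - (\<Sum>i<n. f i)) + (\<Sum>i<n. a^i * y * p i)"
    unfolding h1 h2 by (simp add: diff_diff_eq2)
  also have "\<dots> = 0" unfolding h3 h4 h5 h6 by (rule refl)
  finally have "a * HH p n a y - HH p n a y * a = 0" .
  then show ?thesis by simp
qed

lemma HH_ident:
  assumes "\<And>i. i < n \<Longrightarrow> tup a ps i \<in> ring_center"
  shows "sum_list (map (\<lambda>(u,v). u * HH p n a (v*y)) ps) = y * (\<Sum>i<n. tup a ps i * gg p n a i)"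
proof -
  have "sum_list (map (\<lambda>(u,v). u * HH p n a (v*y)) ps)
      = sum_list (map (\<lambda>x. \<Sum>i<n. (case x of (u,v) \<Rightarrow> u * a^i * v) * (y * gg p n a i)) ps)"
    unfolding HH_def by (rule arg_cong[where f=sum_list], rule map_cong)
      (auto simp: sum_distrib_left mult.assoc)
  also have "\<dots> = (\<Sum>i<n. tup a ps i * (y * gg p n a i))"
    unfolding sum_list_sum_swap tup_def sum_list_mult_const by simp
  also have "\<dots> = y * (\<Sum>i<n. tup a ps i * gg p n a i)"
    unfolding sum_distrib_left
  proof (rule sum.cong)
    fix i assume "i \<in> {..<n}"
    then have "tup a ps i * y = y * tup a ps i" using assms unfolding ring_center_def by auto
    then show "tup a ps i * (y * gg p n a i) = y * (tup a ps i * gg p n a i)"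
      by (metis mult.assoc)
  qed simp
  finally show ?thesis .
qed


lemma central_tuple:
  fixes a :: "'a::division_ring"
  assumes n1: "1 \<le> n"
  shows "\<exists>ps i0. i0 < n \<and> tup a ps i0 = 1 \<and> (\<forall>i<i0. tup a ps i = 0) \<and> (\<forall>i<n. tup a ps i \<in> ring_center)"
proof -
  define P where "P ps \<longleftrightarrow> (\<exists>i<n. tup a ps i \<noteq> 0)" for ps :: "('a\<times>'a) list"
  define m where "m ps = card {i. i<n \<and> tup a ps i \<noteq> 0}" for ps :: "('a\<times>'a) list"
  have "P [(1,1)]" unfolding P_def tup_def using n1 by (intro exI[of _ 0]) simp
  then obtain ps where Pps: "P ps" and min: "\<And>q. P q \<Longrightarrow> m ps \<le> m q"
    using ex_has_least_nat[of P "[(1,1)]" m] by blast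
  define i0 where "i0 = (LEAST i. i<n \<and> tup a ps i \<noteq> 0)"
  have ex: "\<exists>i. i<n \<and> tup a ps i \<noteq> 0" using Pps unfolding P_def by blast
  have i0: "i0 < n \<and> tup a ps i0 \<noteq> 0" unfolding i0_def by (rule LeastI_ex[OF ex])
  have below: "tup a ps i = 0" if "i < i0" for i
  proof (rule ccontr)
    assume "tup a ps i \<noteq> 0"
    moreover have "i < n" using that i0 by simp
    ultimately have "i0 \<le> i" unfolding i0_def by (intro Least_le) simp
    with that show False by simp
  qed
  define b where "b = inverse (tup a ps i0)"
  have b0: "b \<noteq> 0" unfolding b_def using i0 by simp
  define ps1 where "ps1 = map (\<lambda>(u,v). (b*u, v)) ps"
  have t1: "tup a ps1 i = b * tup a ps i" for i unfolding ps1_def by (rule tup_left)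
  have t1i0: "tup a ps1 i0 = 1" using t1 i0 unfolding b_def by simp
  have t1below: "tup a ps1 i = 0" if "i<i0" for i using t1 below that by simp
  have supp: "{i. i<n \<and> tup a ps1 i \<noteq> 0} = {i. i<n \<and> tup a ps i \<noteq> 0}" using t1 b0 by simp
  have cen: "tup a ps1 i \<in> ring_center" if "i < n" for i
  proof -
    have comm: "d * tup a ps1 i = tup a ps1 i * d" for d
    proof -
      define ps2 where "ps2 = map (\<lambda>(u,v). (d*u, v)) ps1 @ map (\<lambda>(u,v). (-u, v*d)) ps1"
      have t2: "tup a ps2 j = d * tup a ps1 j - tup a ps1 j * d" for j
        unfolding ps2_def tup_append tup_left tup_right by simp
      have "\<not> P ps2"
      proof
        assume "P ps2"
        then have le: "m ps \<le> m ps2" by (rule min)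
        have sub: "{j. j<n \<and> tup a ps2 j \<noteq> 0} \<subset> {j. j<n \<and> tup a ps j \<noteq> 0}"
        proof
          show "{j. j<n \<and> tup a ps2 j \<noteq> 0} \<subseteq> {j. j<n \<and> tup a ps j \<noteq> 0}"
          proof
            fix j assume "j \<in> {j. j<n \<and> tup a ps2 j \<noteq> 0}"
            then have "j < n" "tup a ps2 j \<noteq> 0" by auto
            then have "tup a ps1 j \<noteq> 0" using t2[of j] by auto
            then show "j \<in> {j. j<n \<and> tup a ps j \<noteq> 0}" using supp \<open>j<n\<close> by blast
          qed
          have "tup a ps2 i0 = 0" using t2[of i0] t1i0 by simp
          moreover have "i0 \<in> {j. j<n \<and> tup a ps j \<noteq> 0}" using i0 by simp
          ultimately show "{j. j<n \<and> tup a ps2 j \<noteq> 0} \<noteq> {j. j<n \<and> tup a ps j \<noteq> 0}" by blast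
        qed
        have "m ps2 < m ps" unfolding m_def
          by (rule psubset_card_mono[OF _ sub]) (rule finite_subset[of _ "{..<n}"], auto)
        with le show False by simp
      qed
      then have "tup a ps2 i = 0" using that unfolding P_def by blast
      then show ?thesis using t2[of i] by simp
    qed
    show ?thesis unfolding ring_center_def mem_Collect_eq
    proof
      fix x show "tup a ps1 i * x = x * tup a ps1 i" by (rule sym, rule comm)
    qed
  qed
  show ?thesis using i0 t1i0 t1below cen by blast
qed

lemma center_0: "0 \<in> ring_center" unfolding ring_center_def by simp

lemma main:
  fixes \<alpha> :: "'a::division_ring"
  assumes nc: "\<alpha> \<notin> ring_center" and alg: "algebraic_over ring_center \<alpha>"
  shows "\<exists>S::'a set. maximal_subring S"
proof -
  define Q where "Q d \<longleftrightarrow> (\<exists>c. (\<exists>i\<le>d. c i \<noteq> 0) \<and> (\<forall>i\<le>d. c i \<in> ring_center) \<and> (\<Sum>i\<le>d. c i * \<alpha>^i) = 0)" for d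
  have exQ: "\<exists>d. Q d" using alg unfolding algebraic_over_def Q_def by blast
  define n where "n = (LEAST d. Q d)"
  have Qn: "Q n" unfolding n_def using exQ by (rule LeastI_ex)
  have indep: "\<forall>j<n. c j = 0" if cF: "\<And>j. j<n \<Longrightarrow> c j \<in> ring_center" and rel: "(\<Sum>j<n. c j * \<alpha>^j) = 0" for c
  proof (rule ccontr)
    assume "\<not> (\<forall>j<n. c j = 0)"
    then obtain j where j: "j<n" "c j \<noteq> 0" by blast
    then have n1: "n \<ge> 1" by simp
    have eq: "{..n-1} = {..<n}" using n1 by auto
    have "Q (n-1)" unfolding Q_def
    proof (intro exI[of _ c] conjI)
      show "\<exists>i\<le>n-1. c i \<noteq> 0" using j by (intro exI[of _ j]) simp
      show "\<forall>i\<le>n-1. c i \<in> ring_center" using cF eq by auto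
      show "(\<Sum>i\<le>n-1. c i * \<alpha>^i) = 0" using rel eq by simp
    qed
    then have "n \<le> n-1" unfolding n_def by (rule Least_le)
    with n1 show False by simp
  qed
  obtain c where c1: "\<exists>i\<le>n. c i \<noteq> 0" and cF: "\<forall>i\<le>n. c i \<in> ring_center"
    and crel: "(\<Sum>i\<le>n. c i * \<alpha>^i) = 0" using Qn unfolding Q_def by blast
  have split: "(\<Sum>i\<le>n. f i) = (\<Sum>i<n. f i) + f n" for f :: "nat \<Rightarrow> 'a"
    by (simp only: lessThan_Suc_atMost[symmetric] sum.lessThan_Suc)
  have cn: "c n \<noteq> 0"
  proof
    assume cn0: "c n = 0"
    have "(\<Sum>i<n. c i * \<alpha>^i) = 0" using crel cn0 unfolding split[of "\<lambda>i. c i * \<alpha>^i"] by simp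
    then have all0: "\<forall>j<n. c j = 0"
    proof (intro indep)
      show "\<And>j. j < n \<Longrightarrow> c j \<in> ring_center" using cF by simp
    qed
    from c1 obtain i where "i \<le> n" "c i \<noteq> 0" by blast
    with all0 cn0 show False by (cases "i = n") auto
  qed
  have n1: "n \<ge> 1"
  proof (rule ccontr)
    assume "\<not> 1 \<le> n" then have "n = 0" by simp
    then have "c 0 = 0" using crel by simp
    with cn \<open>n=0\<close> show False by simp
  qed
  define p where "p i = (if i \<le> n then inverse (c n) * c i else 0)" for i
  have pc: "p i \<in> ring_center" for i
  proof (cases "i \<le> n")
    case True
    have "inverse (c n) * c i \<in> ring_center"
      by (rule center_mult[OF center_inverse]) (use cF True in auto)
    then show ?thesis unfolding p_def using True by simp
  next
    case False
    then show ?thesis unfolding p_def using center_0 by simp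
  qed
  have pn: "p n = 1" unfolding p_def using cn by simp
  have pz: "p i = 0" if "i > n" for i using that unfolding p_def by simp
  have root: "(\<Sum>i\<le>n. p i * \<alpha>^i) = 0"
  proof -
    have "(\<Sum>i\<le>n. p i * \<alpha>^i) = (\<Sum>i\<le>n. inverse (c n) * (c i * \<alpha>^i))"
      by (rule sum.cong) (auto simp: p_def mult.assoc)
    also have "\<dots> = inverse (c n) * (\<Sum>i\<le>n. c i * \<alpha>^i)" by (rule sum_distrib_left[symmetric])
    finally show ?thesis using crel by simp
  qed
  obtain ps i0 where i0n: "i0 < n" and ti0: "tup \<alpha> ps i0 = 1" and tbelow: "\<forall>i<i0. tup \<alpha> ps i = 0"
    and tcen: "\<forall>i<n. tup \<alpha> ps i \<in> ring_center"
    using central_tuple[OF n1, of \<alpha>] by blast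
  define t where "t = tup \<alpha> ps"
  define mm where "mm = (\<Sum>i<n. t i * gg p n \<alpha> i)"
  have mm_exp: "mm = (\<Sum>j<n. (\<Sum>i<n. t i * p (i+j+1)) * \<alpha>^j)"
  proof -
    have "mm = (\<Sum>i<n. \<Sum>j<n. t i * p (i+j+1) * \<alpha>^j)"
      unfolding mm_def gg_def sum_distrib_left by (simp only: mult.assoc)
    also have "\<dots> = (\<Sum>j<n. \<Sum>i<n. t i * p (i+j+1) * \<alpha>^j)" by (rule sum.swap)
    also have "\<dots> = (\<Sum>j<n. (\<Sum>i<n. t i * p (i+j+1)) * \<alpha>^j)" by (simp only: sum_distrib_right)
    finally show ?thesis .
  qed
  have mm0: "mm \<noteq> 0"
  proof
    assume "mm = 0"
    have coefF: "(\<Sum>i<n. t i * p (i+j+1)) \<in> ring_center" if "j < n" for j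
      by (rule center_sum) (use tcen pc in \<open>auto simp: t_def intro: center_mult\<close>)
    have all0: "\<forall>j<n. (\<Sum>i<n. t i * p (i+j+1)) = 0"
      by (rule indep) (use coefF mm_exp \<open>mm = 0\<close> in auto)
    define j0 where "j0 = n - 1 - i0"
    have j0n: "j0 < n" unfolding j0_def using i0n by simp
    have "(\<Sum>i<n. t i * p (i+j0+1)) = (\<Sum>i<n. if i = i0 then 1 else 0)"
    proof (rule sum.cong[OF refl])
      fix i assume "i \<in> {..<n}"
      consider "i < i0" | "i = i0" | "i > i0" by linarith
      then show "t i * p (i+j0+1) = (if i = i0 then 1 else 0)"
      proof cases
        case 1 then show ?thesis using tbelow unfolding t_def by simp
      next
        case 2
        then have "i + j0 + 1 = n" unfolding j0_def using i0n by simp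
        then show ?thesis using 2 ti0 pn unfolding t_def by simp
      next
        case 3
        then have "i + j0 + 1 > n" unfolding j0_def using i0n by simp
        then show ?thesis using 3 pz by simp
      qed
    qed
    also have "\<dots> = 1" using i0n by simp
    finally show False using all0 j0n by simp
  qed
  define C where "C = {x::'a. \<alpha> * x = x * \<alpha>}"
  have Csub: "is_subring C" unfolding is_subring_def
  proof (intro conjI ballI)
    show "1 \<in> C" unfolding C_def by simp
    fix x y assume "x \<in> C" "y \<in> C"
    then have hx: "\<alpha> * x = x * \<alpha>" and hy: "\<alpha> * y = y * \<alpha>" unfolding C_def by auto
    show "x - y \<in> C" unfolding C_def using hx hy by (simp add: right_diff_distrib left_diff_distrib)
    have "\<alpha> * (x * y) = x * y * \<alpha>"
    proof -
      have "\<alpha> * (x * y) = (\<alpha> * x) * y" by (rule mult.assoc[symmetric])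
      also have "\<dots> = x * (\<alpha> * y)" by (simp only: hx mult.assoc)
      also have "\<dots> = x * y * \<alpha>" by (simp only: hy mult.assoc)
      finally show ?thesis .
    qed
    then show "x * y \<in> C" unfolding C_def by simp
  qed
  have HC: "HH p n \<alpha> y \<in> C" for y
    unfolding C_def using HH_comm[of p n \<alpha> y] pc pn pz root by simp
  have ident: "sum_list (map (\<lambda>(u,v). u * HH p n \<alpha> (v*y)) ps) = y * mm" for y
    unfolding mm_def t_def by (rule HH_ident) (use tcen in auto)
  define U where "U = fst ` set ps"
  have finU: "finite U" unfolding U_def by simp
  have gen: "T = UNIV" if T: "is_subring T" "C \<subseteq> T" "U \<subseteq> T" for T
  proof -
    have "x \<in> T" for x
    proof -
      have "x = x * inverse mm * mm" using mm0 by (simp add: mult.assoc)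
      also have "\<dots> = sum_list (map (\<lambda>(u,v). u * HH p n \<alpha> (v*(x * inverse mm))) ps)"
        by (rule ident[symmetric])
      also have "\<dots> \<in> T"
      proof (rule subring_sum_list[OF T(1)])
        fix z assume z: "z \<in> set ps"
        obtain u v where uv: "z = (u,v)" by fastforce
        have "u \<in> U" unfolding U_def using z uv by force
        then have "u \<in> T" using T by blast
        moreover have "HH p n \<alpha> (v*(x * inverse mm)) \<in> T" using HC T by blast
        ultimately show "(\<lambda>(u,v). u * HH p n \<alpha> (v*(x * inverse mm))) z \<in> T"
          using uv subring_mult[OF T(1)] by simp
      qed
      finally show ?thesis .
    qed
    then show ?thesis by auto
  qed
  have CU: "C \<noteq> UNIV"
  proof
    assume "C = UNIV"
    then have "\<forall>x. \<alpha> * x = x * \<alpha>" unfolding C_def by auto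
    then show False using nc unfolding ring_center_def by simp
  qed
  define A where "A = {T. is_subring T \<and> C \<subseteq> T \<and> \<not> U \<subseteq> T}"
  have CA: "C \<in> A" unfolding A_def using Csub gen CU by blast
  have "\<exists>M\<in>A. \<forall>X\<in>A. M \<subseteq> X \<longrightarrow> X = M"
  proof (rule subset_Zorn_nonempty)
    show "A \<noteq> {}" using CA by blast
    fix Ch assume ne: "Ch \<noteq> {}" and ch: "subset.chain A Ch"
    have ChA: "Ch \<subseteq> A" and cmp: "\<forall>X\<in>Ch. \<forall>Y\<in>Ch. X \<subseteq> Y \<or> Y \<subseteq> X"
      using ch unfolding subset_chain_def by auto
    have sr: "is_subring (\<Union>Ch)" unfolding is_subring_def
    proof (intro conjI ballI)
      obtain X where "X \<in> Ch" using ne by blast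
      then show "1 \<in> \<Union>Ch" using ChA unfolding A_def is_subring_def by blast
      fix x y assume "x \<in> \<Union>Ch" "y \<in> \<Union>Ch"
      then obtain X Y where XY: "X \<in> Ch" "Y \<in> Ch" "x \<in> X" "y \<in> Y" by blast
      then obtain Z where Z: "Z \<in> Ch" "x \<in> Z" "y \<in> Z" using cmp by blast
      then have "is_subring Z" using ChA unfolding A_def by blast
      then show "x - y \<in> \<Union>Ch" "x * y \<in> \<Union>Ch" using Z unfolding is_subring_def by blast+
    qed
    have "C \<subseteq> \<Union>Ch" using ne ChA unfolding A_def by blast
    moreover have "\<not> U \<subseteq> \<Union>Ch"
    proof
      assume "U \<subseteq> \<Union>Ch"
      then obtain B where "B \<in> Ch" "U \<subseteq> B" using finite_subset_Union_chain[OF finU _ ne ch] by blast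
      then show False using ChA unfolding A_def by blast
    qed
    ultimately show "\<Union>Ch \<in> A" using sr unfolding A_def by blast
  qed
  then obtain M where MA: "M \<in> A" and Mmax: "\<forall>X\<in>A. M \<subseteq> X \<longrightarrow> X = M" by blast
  have "maximal_subring M" unfolding maximal_subring_def
  proof (intro conjI allI impI)
    show "is_subring M" using MA unfolding A_def by blast
    show "M \<noteq> UNIV" using MA unfolding A_def by blast
    fix T assume T: "is_subring T \<and> M \<subseteq> T \<and> T \<noteq> UNIV"
    have "C \<subseteq> T" using MA T unfolding A_def by blast
    moreover have "\<not> U \<subseteq> T" using gen T \<open>C \<subseteq> T\<close> by blast
    ultimately have "T \<in> A" using T unfolding A_def by blast
    then show "T = M" using Mmax T by blast
  qed
  then show ?thesis by blast
qed

theorem corollary2p10: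
  shows "(\<exists>S::'a::division_ring set. maximal_subring S) \<or>
         (\<forall>\<alpha>::'a. \<alpha> \<notin> ring_center \<longrightarrow> \<not> algebraic_over ring_center \<alpha>)"
  using main by blast

end
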